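(* Let $L$ be a finite distributive lattice and let $m$ be the maximum size of an antichain in $\operatorname{Mi}(L)$. Then for every $k\ge0$, $$q_k(L)=\sum_{j=k}^m\binom jk d_j^-(L),\qquad d_k^-(L)=\sum_{j=k}^m(-1)^{j-k}\binom jk q_j(L).$$
   Context: $\operatorname{Mi}(L)$ is the set of meet-irreducible elements of $L$, as a poset under the order of $L$. For a finite lattice $M$ and $k\ge0$, $q_k(M)$ is the number of convex sublattices (intervals) of $M$ isomorphic to the Boolean lattice $\mathbf{B}_k$ with $2^k$ elements. For $a\in M$, $\deg^-_M(a)$ is the number of elements of $M$ covering $a$, and $d_k^-(M)$ is the number of $a\in M$ with $\deg^-_M(a)=k$. *)

theory Defs
  imports Main
begin

definition meet_irreducible :: "'a::lattice \<Rightarrow> bool" where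
  "meet_irreducible a \<longleftrightarrow> (\<exists>x. \<not> x \<le> a) \<and> (\<forall>x y. a = inf x y \<longrightarrow> a = x \<or> a = y)"

definition Mi :: "'a::lattice set" where
  "Mi = {a. meet_irreducible a}"

definition antichain_in :: "'a::order set \<Rightarrow> 'a set \<Rightarrow> bool" where
  "antichain_in S P \<longleftrightarrow> S \<subseteq> P \<and> (\<forall>x\<in>S. \<forall>y\<in>S. x \<le> y \<longrightarrow> x = y)"

definition width_Mi :: "'a::{finite,lattice} itself \<Rightarrow> nat" where
  "width_Mi _ = Max {card S | S :: 'a set. antichain_in S Mi}"

definition boolean_interval :: "nat \<Rightarrow> 'a::order \<Rightarrow> 'a \<Rightarrow> bool" where
  "boolean_interval k a b \<longleftrightarrow> a \<le> b \<and>
     (\<exists>f. bij_betw f (Pow {..<k}) {a..b} \<and>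
          (\<forall>X Y. X \<subseteq> {..<k} \<longrightarrow> Y \<subseteq> {..<k} \<longrightarrow> (X \<subseteq> Y \<longleftrightarrow> f X \<le> f Y)))"

definition q :: "'a::{finite,order} itself \<Rightarrow> nat \<Rightarrow> nat" where
  "q _ k = card {(a :: 'a, b). boolean_interval k a b}"

definition covers :: "'a::order \<Rightarrow> 'a \<Rightarrow> bool" where
  "covers b a \<longleftrightarrow> a < b \<and> \<not> (\<exists>c. a < c \<and> c < b)"

definition up_degree :: "'a::{finite,order} \<Rightarrow> nat" where
  "up_degree a = card {b. covers b a}"

definition d_minus :: "'a::{finite,order} itself \<Rightarrow> nat \<Rightarrow> nat" where
  "d_minus _ k = card {a :: 'a. up_degree a = k}"

end

theory Submission
  imports Defs
begin


definition jn :: "'a::lattice \<Rightarrow> 'a set \<Rightarrow> 'a" where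
  "jn a S = Finite_Set.fold sup a S"

lemma jn_empty[simp]: "jn a {} = a" by (simp add: jn_def)

lemma jn_insert[simp]: "finite S \<Longrightarrow> jn a (insert x S) = sup x (jn a S)"
proof -
  interpret comp_fun_idem "sup :: 'a \<Rightarrow> 'a \<Rightarrow> 'a" by (fact comp_fun_idem_sup)
  assume "finite S" then show ?thesis by (simp add: jn_def)
qed

lemma jn_ge_a: "finite S \<Longrightarrow> a \<le> jn a S"
  by (induction S rule: finite_induct) (auto intro: le_supI2)

lemma jn_ge: "finite S \<Longrightarrow> s \<in> S \<Longrightarrow> s \<le> jn a S"
  by (induction S rule: finite_induct) (auto intro: le_supI2)

lemma jn_least: "finite S \<Longrightarrow> a \<le> x \<Longrightarrow> \<forall>s\<in>S. s \<le> x \<Longrightarrow> jn a S \<le> x"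
  by (induction S rule: finite_induct) auto

lemma jn_inf: "finite S \<Longrightarrow> inf c (jn a S) = jn (inf c a) (inf (c::'a::distrib_lattice) ` S)"
  by (induction S rule: finite_induct) (auto simp: inf_sup_distrib1)

lemma cov_inf:
  assumes "covers b a" "covers b' a" "b \<noteq> b'"
  shows "inf b b' = (a::'a::lattice)"
proof -
  have "a \<le> inf b b'" using assms by (auto simp: covers_def)
  moreover have "inf b b' \<noteq> b"
  proof
    assume "inf b b' = b"
    then have "b \<le> b'" by (metis inf.absorb_iff1)
    then show False using assms unfolding covers_def by (metis order.not_eq_order_implies_strict)
  qed
  then have "inf b b' < b" by (simp add: order_less_le)
  ultimately show ?thesis using assms unfolding covers_def by (metis order_le_less)
qed

lemma cov_inf2:
  assumes "covers b a" "a \<le> c" 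
  shows "inf c b = (a::'a::lattice) \<or> b \<le> c"
proof (cases "b \<le> c")
  case False
  then have "inf c b < b" by (metis inf.absorb_iff2 inf.cobounded2 inf_commute order_less_le)
  moreover have "a \<le> inf c b" using assms by (auto simp: covers_def)
  ultimately show ?thesis using assms unfolding covers_def by (metis order_le_less)
qed simp

context
  fixes a :: "'a::{finite,distrib_lattice}"
begin

lemma not_le_jn:
  assumes "S \<subseteq> {c. covers c a}" "covers x a" "x \<notin> S"
  shows "\<not> x \<le> jn a S"
proof
  assume h: "x \<le> jn a S"
  have "inf x ` S \<subseteq> {a}"
  proof
    fix y assume "y \<in> inf x ` S"
    then obtain s where s: "s \<in> S" "y = inf x s" by blast
    then have "covers s a" "s \<noteq> x" using assms by auto
    then show "y \<in> {a}" using cov_inf[of x a s] assms s by simp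
  qed
  then have "jn (inf x a) (inf x ` S) \<le> a"
    using assms by (intro jn_least) (auto simp: covers_def)
  moreover have "inf x (jn a S) = x" using h by (simp add: inf.absorb1)
  ultimately have "x \<le> a" using jn_inf[of S x a] by simp
  then show False using assms by (auto simp: covers_def)
qed

lemma covs_below:
  assumes "S \<subseteq> {c. covers c a}"
  shows "{c. covers c a \<and> c \<le> jn a S} = S"
proof
  show "{c. covers c a \<and> c \<le> jn a S} \<subseteq> S"
  proof
    fix c assume "c \<in> {c. covers c a \<and> c \<le> jn a S}"
    then have "covers c a" "c \<le> jn a S" by auto
    then show "c \<in> S" using not_le_jn[OF assms, of c] by blast
  qed
  show "S \<subseteq> {c. covers c a \<and> c \<le> jn a S}"
  proof
    fix c assume "c \<in> S"
    then show "c \<in> {c. covers c a \<and> c \<le> jn a S}" using assms jn_ge[of S c a] by auto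
  qed
qed

lemma below_jn:
  assumes "S \<subseteq> {c. covers c a}" "a \<le> c" "c \<le> jn a S"
  shows "c = jn a {s\<in>S. s \<le> c}"
proof (rule antisym)
  have "c = inf c (jn a S)" using assms by (simp add: inf.absorb1)
  also have "\<dots> = jn (inf c a) (inf c ` S)" by (simp add: jn_inf)
  also have "\<dots> \<le> jn a {s\<in>S. s \<le> c}"
  proof (rule jn_least)
    show "inf c a \<le> jn a {s\<in>S. s \<le> c}" using jn_ge_a by (meson finite le_infI2)
    show "\<forall>s\<in>inf c ` S. s \<le> jn a {s \<in> S. s \<le> c}"
    proof
      fix s assume "s \<in> inf c ` S"
      then obtain t where t: "t \<in> S" "s = inf c t" by auto
      then have "inf c t = a \<or> t \<le> c" using cov_inf2 assms by blast
      then show "s \<le> jn a {s \<in> S. s \<le> c}"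
        using t jn_ge_a[of _ a] jn_ge[of _ t a] by (metis (mono_tags, lifting) finite inf.coboundedI2 mem_Collect_eq)
    qed
  qed simp
  finally show "c \<le> jn a {s\<in>S. s \<le> c}" .
  show "jn a {s\<in>S. s \<le> c} \<le> c" using assms by (intro jn_least) auto
qed


lemma bi_from_subset:
  assumes "S \<subseteq> {c. covers c a}" "card S = k"
  shows "boolean_interval k a (jn a S)"
proof -
  obtain g where g: "bij_betw g {0..<k} S" using ex_bij_betw_nat_finite[of S] assms by auto
  have gS: "g ` {..<k} = S" "inj_on g {..<k}" using g by (auto simp: bij_betw_def lessThan_atLeast0)
  define f where "f X = jn a (g ` X)" for X
  have sub: "g ` X \<subseteq> {c. covers c a}" if "X \<subseteq> {..<k}" for X using that gS assms by blast
  have ord: "X \<subseteq> Y \<longleftrightarrow> f X \<le> f Y" if "X \<subseteq> {..<k}" "Y \<subseteq> {..<k}" for X Y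
  proof
    assume "X \<subseteq> Y" then show "f X \<le> f Y" unfolding f_def
      by (intro jn_least) (auto simp: jn_ge_a intro!: jn_ge)
  next
    assume le: "f X \<le> f Y"
    show "X \<subseteq> Y"
    proof
      fix i assume i: "i \<in> X"
      have "g i \<le> f Y" using le jn_ge[of "g ` X" "g i" a] i unfolding f_def by auto
      moreover have "covers (g i) a" using sub[OF that(1)] i by auto
      ultimately have "g i \<in> g ` Y" using covs_below[OF sub[OF that(2)]] unfolding f_def by blast
      then show "i \<in> Y" using gS(2) i that by (meson inj_on_image_mem_iff subsetD)
    qed
  qed
  have "bij_betw f (Pow {..<k}) {a..jn a S}"
  proof (rule bij_betw_imageI)
    show "inj_on f (Pow {..<k})"
    proof (rule inj_onI)
      fix x y assume "x \<in> Pow {..<k}" "y \<in> Pow {..<k}" "f x = f y"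
      then show "x = y" using ord[of x y] ord[of y x] by auto
    qed
    show "f ` Pow {..<k} = {a..jn a S}"
    proof
      show "f ` Pow {..<k} \<subseteq> {a..jn a S}"
        using ord[of _ "{..<k}"] gS by (auto simp: f_def jn_ge_a)
      show "{a..jn a S} \<subseteq> f ` Pow {..<k}"
      proof
        fix c assume c: "c \<in> {a..jn a S}"
        have "c = jn a {s\<in>S. s \<le> c}" using below_jn[OF assms(1)] c by auto
        also have "{s\<in>S. s \<le> c} = g ` {i\<in>{..<k}. g i \<le> c}" using gS by auto
        finally show "c \<in> f ` Pow {..<k}" unfolding f_def by blast
      qed
    qed
  qed
  moreover have "a \<le> jn a S" by (simp add: jn_ge_a)
  ultimately show ?thesis unfolding boolean_interval_def using ord by blast
qed

lemma bi_to_subset: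
  assumes "boolean_interval k a b"
  shows "\<exists>S. S \<subseteq> {c. covers c a} \<and> card S = k \<and> b = jn a S"
proof -
  obtain f where f: "bij_betw f (Pow {..<k}) {a..b}"
    and ord: "\<And>X Y. X \<subseteq> {..<k} \<Longrightarrow> Y \<subseteq> {..<k} \<Longrightarrow> (X \<subseteq> Y \<longleftrightarrow> f X \<le> f Y)"
    and ab: "a \<le> b"
    using assms unfolding boolean_interval_def by blast
  have img: "f ` Pow {..<k} = {a..b}" and inj: "inj_on f (Pow {..<k})" using f by (auto simp: bij_betw_def)
  have pre: "\<exists>X. X \<subseteq> {..<k} \<and> f X = c" if "a \<le> c" "c \<le> b" for c
  proof -
    have "c \<in> f ` Pow {..<k}" using img that by simp
    then show ?thesis by auto
  qed
  have f0: "f {} = a"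
  proof -
    obtain X where X: "X \<subseteq> {..<k}" "f X = a" using pre[of a] ab by auto
    have "f {} \<le> a" using ord[of "{}" X] X by auto
    moreover have "f {} \<in> {a..b}" using img by blast
    ultimately show ?thesis by auto
  qed
  have fk: "f {..<k} = b"
  proof -
    obtain X where X: "X \<subseteq> {..<k}" "f X = b" using pre[of b] ab by auto
    have "b \<le> f {..<k}" using ord[of X "{..<k}"] X by auto
    moreover have "f {..<k} \<in> {a..b}" using img by blast
    ultimately show ?thesis by auto
  qed
  define S where "S = (\<lambda>i. f {i}) ` {..<k}"
  have cov: "covers (f {i}) a" if i: "i < k" for i
    unfolding covers_def
  proof
    show "a < f {i}" using ord[of "{i}" "{}"] ord[of "{}" "{i}"] f0 i by (auto simp: order_less_le)
    show "\<not> (\<exists>c>a. c < f {i})"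
    proof
      assume "\<exists>c>a. c < f {i}"
      then obtain c where c: "a < c" "c < f {i}" by blast
      have "f {i} \<le> b" using ord[of "{i}" "{..<k}"] fk i by auto
      then have "c \<in> {a..b}" using c by auto
      then obtain X where X: "X \<subseteq> {..<k}" "c = f X" using pre[of c] by auto
      have "X \<subseteq> {i}" using ord[of X "{i}"] X c i by auto
      moreover have "X \<noteq> {i}" using c X by auto
      ultimately have "X = {}" by auto
      then show False using c X f0 by auto
    qed
  qed
  have "inj_on (\<lambda>i. f {i}) {..<k}"
  proof (rule inj_onI)
    fix i j assume ij: "i \<in> {..<k}" "j \<in> {..<k}" "f {i} = f {j}"
    then have "{i} = {j}" using inj_onD[OF inj ij(3)] by simp
    then show "i = j" by simp
  qed
  then have cS: "card S = k" unfolding S_def by (simp add: card_image)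
  have Ssub: "S \<subseteq> {c. covers c a}" using cov S_def by auto
  have "jn a S \<le> b" using ord[of _ "{..<k}"] fk ab by (intro jn_least) (auto simp: S_def)
  moreover have "a \<le> jn a S" by (simp add: jn_ge_a)
  ultimately obtain Y where Y: "Y \<subseteq> {..<k}" "jn a S = f Y" using pre[of "jn a S"] by metis
  have "{..<k} \<subseteq> Y"
  proof
    fix i assume i: "i \<in> {..<k}"
    have "f {i} \<le> f Y" using Y jn_ge[of S "f {i}" a] i by (auto simp: S_def)
    then show "i \<in> Y" using ord[of "{i}" Y] Y i by auto
  qed
  then have "jn a S = b" using Y fk by auto
  then show ?thesis using cS Ssub by auto
qed

lemma card_bi: "card {b. boolean_interval k a b} = up_degree a choose k"
proof -
  let ?F = "{S. S \<subseteq> {c. covers c a} \<and> card S = k}"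
  have eq: "{b. boolean_interval k a b} = jn a ` ?F"
  proof
    show "{b. boolean_interval k a b} \<subseteq> jn a ` ?F"
    proof
      fix b assume "b \<in> {b. boolean_interval k a b}"
      then have "boolean_interval k a b" by simp
      then obtain S where "S \<subseteq> {c. covers c a}" "card S = k" "b = jn a S" using bi_to_subset by blast
      then show "b \<in> jn a ` ?F" by blast
    qed
    show "jn a ` ?F \<subseteq> {b. boolean_interval k a b}"
    proof
      fix b assume "b \<in> jn a ` ?F"
      then obtain S where "S \<subseteq> {c. covers c a}" "card S = k" "b = jn a S" by blast
      then show "b \<in> {b. boolean_interval k a b}" using bi_from_subset[of S k] by simp
    qed
  qed
  have inj: "inj_on (jn a) ?F"
  proof (rule inj_onI)
    fix x y assume xy: "x \<in> ?F" "y \<in> ?F" "jn a x = jn a y"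
    have "x = {c. covers c a \<and> c \<le> jn a x}" using covs_below[of x] xy(1) by simp
    also have "\<dots> = {c. covers c a \<and> c \<le> jn a y}" using xy(3) by simp
    also have "\<dots> = y" using covs_below[of y] xy(2) by simp
    finally show "x = y" .
  qed
  have "card {b. boolean_interval k a b} = card ?F" unfolding eq using card_image[OF inj] .
  also have "\<dots> = up_degree a choose k" unfolding up_degree_def
    using n_subsets[of "{c. covers c a}" k] by simp
  finally show ?thesis .
qed

lemma deg_le_width: "up_degree a \<le> width_Mi TYPE('a)"
proof -
  let ?C = "{c. covers c a}"
  define M where "M b = (SOME x. x \<in> {y. a \<le> y \<and> \<not> b \<le> y} \<and> (\<forall>z \<in> {y. a \<le> y \<and> \<not> b \<le> y}. x \<le> z \<longrightarrow> x = z))" for b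
  have Mprop: "a \<le> M b \<and> \<not> b \<le> M b \<and> (\<forall>z. a \<le> z \<longrightarrow> \<not> b \<le> z \<longrightarrow> M b \<le> z \<longrightarrow> M b = z)"
    if cb: "covers b a" for b
  proof -
    have "a \<in> {y. a \<le> y \<and> \<not> b \<le> y}" using cb by (auto simp: covers_def)
    then have ne: "{y. a \<le> y \<and> \<not> b \<le> y} \<noteq> {}" by blast
    have "\<exists>x. x \<in> {y. a \<le> y \<and> \<not> b \<le> y} \<and> (\<forall>z \<in> {y. a \<le> y \<and> \<not> b \<le> y}. x \<le> z \<longrightarrow> x = z)"
      using finite_has_maximal[OF finite ne] by (simp only: Bex_def)
    then have "M b \<in> {y. a \<le> y \<and> \<not> b \<le> y} \<and> (\<forall>z \<in> {y. a \<le> y \<and> \<not> b \<le> y}. M b \<le> z \<longrightarrow> M b = z)"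
      unfolding M_def by (rule someI_ex)
    then show ?thesis by blast
  qed
  have below: "b' \<le> M b" if cb: "covers b a" and cb': "covers b' a" and ne: "b \<noteq> b'" for b b'
  proof (rule ccontr)
    assume nb: "\<not> b' \<le> M b"
    have P: "a \<le> M b" "\<not> b \<le> M b" "\<And>z. a \<le> z \<Longrightarrow> \<not> b \<le> z \<Longrightarrow> M b \<le> z \<Longrightarrow> M b = z"
      using Mprop[OF cb] by auto
    have "M b \<noteq> sup (M b) b'" using nb by (metis sup.cobounded2)
    have asup: "a \<le> sup (M b) b'" using P(1) by (rule le_supI1)
    have "b \<le> sup (M b) b'"
    proof (rule ccontr)
      assume "\<not> b \<le> sup (M b) b'"
      then have "M b = sup (M b) b'" using P(3)[OF asup] by simp
      then show False using \<open>M b \<noteq> sup (M b) b'\<close> by simp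
    qed
    then have "b = inf b (sup (M b) b')" by (simp add: inf.absorb1)
    also have "\<dots> = sup (inf b (M b)) (inf b b')" by (rule inf_sup_distrib1)
    also have "inf b (M b) = a" using cov_inf2[OF cb P(1)] P(2) by (simp add: inf_commute)
    also have "inf b b' = a" using cov_inf[OF cb cb' ne] .
    finally have "b = a" by simp
    then show False using cb by (simp add: covers_def)
  qed
  have mi: "M b \<in> Mi" if cb: "covers b a" for b
    unfolding Mi_def meet_irreducible_def
  proof (intro CollectI conjI allI impI)
    have P: "a \<le> M b" "\<not> b \<le> M b" "\<And>z. a \<le> z \<Longrightarrow> \<not> b \<le> z \<Longrightarrow> M b \<le> z \<Longrightarrow> M b = z"
      using Mprop[OF cb] by auto
    show "\<exists>x. \<not> x \<le> M b" using P(2) by blast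
    fix x y assume xy: "M b = inf x y"
    show "M b = x \<or> M b = y"
    proof (rule ccontr)
      assume "\<not> (M b = x \<or> M b = y)"
      then have "M b \<noteq> x" "M b \<noteq> y" by auto
      moreover have "M b \<le> x" "M b \<le> y" using xy by simp_all
      moreover have "a \<le> x" "a \<le> y" using P(1) calculation by (meson order_trans)+
      ultimately have "b \<le> x" "b \<le> y" using P(3)[of x] P(3)[of y] by auto
      then have "b \<le> M b" using xy by simp
      then show False using P(2) by simp
    qed
  qed
  have inj: "inj_on M ?C"
  proof (rule inj_onI)
    fix b b' assume h: "b \<in> ?C" "b' \<in> ?C" "M b = M b'"
    show "b = b'"
    proof (rule ccontr)
      assume "b \<noteq> b'"
      then have "b' \<le> M b" using below[of b b'] h(1,2) by simp
      then have "b' \<le> M b'" using h(3) by simp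
      then show False using h(2) Mprop[of b'] by auto
    qed
  qed
  have anti: "antichain_in (M ` ?C) Mi"
    unfolding antichain_in_def
  proof (intro conjI ballI impI)
    show "M ` ?C \<subseteq> Mi" using mi by blast
    fix x y assume "x \<in> M ` ?C" "y \<in> M ` ?C" and le: "x \<le> y"
    then obtain b b' where bb: "b \<in> ?C" "b' \<in> ?C" "x = M b" "y = M b'" by blast
    show "x = y"
    proof (cases "b = b'")
      case True then show ?thesis using bb by simp
    next
      case False
      then have "b' \<le> M b" using below bb by auto
      then have "b' \<le> M b'" using le bb by (metis order_trans)
      then show ?thesis using bb Mprop[of b'] by auto
    qed
  qed
  have fin: "finite {card S | S :: 'a set. antichain_in S Mi}"
  proof -
    have "{card S | S :: 'a set. antichain_in S Mi} = card ` {S :: 'a set. antichain_in S Mi}"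
    proof (rule set_eqI, rule iffI)
      fix u assume "u \<in> {card S | S :: 'a set. antichain_in S Mi}"
      then obtain S :: "'a set" where "u = card S" "antichain_in S Mi" by blast
      then show "u \<in> card ` {S :: 'a set. antichain_in S Mi}" by blast
    next
      fix u assume "u \<in> card ` {S :: 'a set. antichain_in S Mi}"
      then obtain S :: "'a set" where "u = card S" "antichain_in S Mi" by blast
      then show "u \<in> {card S | S :: 'a set. antichain_in S Mi}" by blast
    qed
    then show ?thesis by simp
  qed
  have "up_degree a = card (M ` ?C)" unfolding up_degree_def using card_image[OF inj] by simp
  also have "\<dots> \<le> Max {card S | S :: 'a set. antichain_in S Mi}"
  proof (rule Max_ge[OF fin])
    show "card (M ` ?C) \<in> {card S | S :: 'a set. antichain_in S Mi}"
      using anti by (intro CollectI exI[of _ "M ` ?C"]) simp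
  qed
  finally show ?thesis unfolding width_Mi_def .
qed

end


lemma shift_sum: fixes k m :: nat shows "k \<le> m \<Longrightarrow> (\<Sum>j=k..m. g (j - k)) = (\<Sum>t=0..m-k. (g t :: int))"
proof -
  assume "k \<le> m"
  have "(\<Sum>t=0..m-k. g t) = (\<Sum>t=0+k..(m-k)+k. g (t - k))"
    by (subst sum.shift_bounds_cl_nat_ivl) simp
  then show ?thesis using \<open>k \<le> m\<close> by simp
qed

lemma alt_sum:
  assumes "n \<le> N"
  shows "(\<Sum>t=0..N. (-1)^t * int (n choose t)) = (if n = 0 then 1 else 0)"
proof -
  have "(\<Sum>t=0..N. (-1)^t * int (n choose t)) = (\<Sum>t=0..n. (-1)^t * int (n choose t))"
    using assms by (intro sum.mono_neutral_right) auto
  also have "\<dots> = (if n = 0 then 1 else 0)"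
    using choose_alternating_sum[of n, where 'a=int] by (auto simp: atLeast0AtMost)
  finally show ?thesis .
qed

lemma kernel:
  assumes "k \<le> i" "i \<le> m"
  shows "(\<Sum>j=k..m. (-1)^(j-k) * int (j choose k) * int (i choose j)) = (if i = k then 1 else 0)"
proof -
  have "(\<Sum>j=k..m. (-1)^(j-k) * int (j choose k) * int (i choose j))
      = (\<Sum>j=k..m. int (i choose k) * ((-1)^(j-k) * int ((i-k) choose (j-k))))"
  proof (rule sum.cong)
    fix j assume j: "j \<in> {k..m}"
    show "(-1)^(j-k) * int (j choose k) * int (i choose j) = int (i choose k) * ((-1)^(j-k) * int ((i-k) choose (j-k)))"
    proof (cases "j \<le> i")
      case True
      then have "(i choose j) * (j choose k) = (i choose k) * ((i-k) choose (j-k))"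
        using j by (intro choose_mult) auto
      then have "int (i choose j) * int (j choose k) = int (i choose k) * int ((i-k) choose (j-k))"
        by (metis of_nat_mult)
      then show ?thesis by (simp add: algebra_simps)
    next
      case False
      then show ?thesis using j assms by (simp add: binomial_eq_0)
    qed
  qed simp
  also have "\<dots> = int (i choose k) * (\<Sum>j=k..m. (-1)^(j-k) * int ((i-k) choose (j-k)))"
    by (simp add: sum_distrib_left)
  also have "(\<Sum>j=k..m. (-1)^(j-k) * int ((i-k) choose (j-k))) = (\<Sum>t=0..m-k. (-1)^t * int ((i-k) choose t))"
    using assms shift_sum[of k m "\<lambda>t. (-1)^t * int ((i-k) choose t)"] by simp
  also have "\<dots> = (if i - k = 0 then 1 else 0)" using assms by (intro alt_sum) simp
  finally show ?thesis using assms by auto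
qed

lemma inversion:
  fixes d Q :: "nat \<Rightarrow> nat"
  assumes Q: "\<And>j. Q j = (\<Sum>i=j..m. (i choose j) * d i)" and d0: "\<And>i. i > m \<Longrightarrow> d i = 0"
  shows "int (d k) = (\<Sum>j=k..m. (-1)^(j-k) * int (j choose k) * int (Q j))"
proof (cases "k \<le> m")
  case False
  then show ?thesis using d0 by simp
next
  case True
  have Q': "int (Q j) = (\<Sum>i=k..m. int (i choose j) * int (d i))" if "j \<in> {k..m}" for j
  proof -
    have "int (Q j) = (\<Sum>i=j..m. int (i choose j) * int (d i))" using Q[of j] by simp
    also have "\<dots> = (\<Sum>i=k..m. int (i choose j) * int (d i))"
      using that by (intro sum.mono_neutral_left) auto
    finally show ?thesis .
  qed
  have "(\<Sum>j=k..m. (-1)^(j-k) * int (j choose k) * int (Q j))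
      = (\<Sum>j=k..m. \<Sum>i=k..m. (-1)^(j-k) * int (j choose k) * int (i choose j) * int (d i))"
    using Q' by (simp add: sum_distrib_left mult.assoc)
  also have "\<dots> = (\<Sum>i=k..m. \<Sum>j=k..m. (-1)^(j-k) * int (j choose k) * int (i choose j) * int (d i))"
    by (rule sum.swap)
  also have "\<dots> = (\<Sum>i=k..m. (\<Sum>j=k..m. (-1)^(j-k) * int (j choose k) * int (i choose j)) * int (d i))"
    by (simp add: sum_distrib_right)
  also have "\<dots> = (\<Sum>i=k..m. (if i = k then 1 else 0) * int (d i))"
    by (intro sum.cong refl) (simp add: kernel)
  also have "\<dots> = (\<Sum>i=k..m. if i = k then int (d i) else 0)"
    by (intro sum.cong) auto
  also have "\<dots> = int (d k)" using True by (simp add: sum.delta)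
  finally show ?thesis by simp
qed


lemma q_sum:
  fixes j :: nat
  shows "q TYPE('a::{finite,distrib_lattice}) j = (\<Sum>i=j..width_Mi TYPE('a). (i choose j) * d_minus TYPE('a) i)"
proof -
  let ?m = "width_Mi TYPE('a)"
  have "{(a :: 'a, b). boolean_interval j a b} = (SIGMA a:UNIV. {b. boolean_interval j a b})" by auto
  then have "q TYPE('a) j = card (SIGMA a:(UNIV :: 'a set). {b. boolean_interval j a b})"
    unfolding q_def by simp
  also have "\<dots> = (\<Sum>a\<in>(UNIV :: 'a set). card {b. boolean_interval j a b})"
    by (rule card_SigmaI) auto
  also have "\<dots> = (\<Sum>a\<in>(UNIV :: 'a set). up_degree a choose j)"
    by (simp add: card_bi)
  also have "\<dots> = (\<Sum>i\<in>up_degree ` (UNIV :: 'a set). \<Sum>a\<in>{x. x \<in> (UNIV :: 'a set) \<and> up_degree x = i}. up_degree a choose j)"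
    by (rule sum.image_gen) simp
  also have "\<dots> = (\<Sum>i\<in>up_degree ` (UNIV :: 'a set). (i choose j) * d_minus TYPE('a) i)"
    by (intro sum.cong refl) (simp add: d_minus_def)
  also have "\<dots> = (\<Sum>i\<in>{0..?m}. (i choose j) * d_minus TYPE('a) i)"
  proof (rule sum.mono_neutral_left)
    show "up_degree ` (UNIV :: 'a set) \<subseteq> {0..?m}" using deg_le_width by auto
    show "\<forall>i\<in>{0..?m} - up_degree ` (UNIV :: 'a set). (i choose j) * d_minus TYPE('a) i = 0"
    proof
      fix i assume "i \<in> {0..?m} - up_degree ` (UNIV :: 'a set)"
      then have "{a :: 'a. up_degree a = i} = {}" by auto
      then show "(i choose j) * d_minus TYPE('a) i = 0" by (simp add: d_minus_def)
    qed
  qed simp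
  also have "\<dots> = (\<Sum>i\<in>{j..?m}. (i choose j) * d_minus TYPE('a) i)"
    by (rule sum.mono_neutral_right) auto
  finally show ?thesis .
qed

theorem proposition2:
  fixes k :: nat
  defines "m \<equiv> width_Mi TYPE('a::{finite,distrib_lattice})"
  shows "q TYPE('a) k = (\<Sum>j=k..m. (j choose k) * d_minus TYPE('a) j)
       \<and> int (d_minus TYPE('a) k) = (\<Sum>j=k..m. (-1)^(j-k) * int (j choose k) * int (q TYPE('a) j))"
proof
  have Q: "\<And>j. q TYPE('a) j = (\<Sum>i=j..m. (i choose j) * d_minus TYPE('a) i)"
    unfolding m_def by (rule q_sum)
  then show "q TYPE('a) k = (\<Sum>j=k..m. (j choose k) * d_minus TYPE('a) j)" .
  have d0: "d_minus TYPE('a) i = 0" if "i > m" for i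
  proof -
    have dl: "up_degree a \<le> m" for a :: 'a unfolding m_def by (rule deg_le_width)
    have "{a :: 'a. up_degree a = i} = {}" using dl that by (auto simp: not_le[symmetric])
    then show ?thesis by (simp add: d_minus_def)
  qed
  show "int (d_minus TYPE('a) k) = (\<Sum>j=k..m. (-1)^(j-k) * int (j choose k) * int (q TYPE('a) j))"
    by (rule inversion[OF Q d0])
qed

end
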